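(* Let $\mathcal{H}$ be a complex Hilbert space and $A,B\in\mathcal{B}(\mathcal{H})$. Then for all $p\geq 1$, \[ \omega^{p}(A^{*}B) \leq \frac{1}{2} \|A\|^{p}\|B\|^{p} + \frac{1}{2} \omega^{p}(BA^{*}). \]
   Context: $\omega(T)=\sup\{|\langle Tx,x\rangle|:x\in\mathcal{H},\|x\|=1\}$ denotes the numerical radius and $\|\cdot\|$ the operator norm. *)

theory Defs
  imports "HOL-Analysis.Analysis"
begin

class complex_inner = real_normed_vector +
  fixes scaleC :: "complex \<Rightarrow> 'a \<Rightarrow> 'a"
    and cinner :: "'a \<Rightarrow> 'a \<Rightarrow> complex"
  assumes scaleC_add_right: "scaleC a (x + y) = scaleC a x + scaleC a y"
    and scaleC_add_left: "scaleC (a + b) x = scaleC a x + scaleC b x"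
    and scaleC_scaleC: "scaleC a (scaleC b x) = scaleC (a * b) x"
    and scaleC_one: "scaleC 1 x = x"
    and scaleR_scaleC: "scaleR r x = scaleC (complex_of_real r) x"
    and cinner_add_left: "cinner (x + y) z = cinner x z + cinner y z"
    and cinner_scaleC_left: "cinner (scaleC a x) y = a * cinner x y"
    and cinner_commute: "cinner x y = cnj (cinner y x)"
    and norm_eq_sqrt_cinner: "norm x = sqrt (Re (cinner x x))"

class chilbert_space = complex_inner + complete_space

definition bounded_clinear :: "('a::complex_inner \<Rightarrow> 'b::complex_inner) \<Rightarrow> bool" where
  "bounded_clinear T \<longleftrightarrow>
     (\<forall>x y. T (x + y) = T x + T y) \<and>
     (\<forall>c x. T (scaleC c x) = scaleC c (T x)) \<and>
     (\<exists>K. \<forall>x. norm (T x) \<le> norm x * K)"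

definition cadjoint :: "('a::complex_inner \<Rightarrow> 'a) \<Rightarrow> ('a \<Rightarrow> 'a)" where
  "cadjoint T = (THE S. \<forall>x y. cinner (T x) y = cinner x (S y))"

text \<open>Numerical radius; the 0 is only there so that the trivial space gets value 0
(sup of the empty set); otherwise it does not change the supremum.\<close>
definition numrad :: "('a::complex_inner \<Rightarrow> 'a) \<Rightarrow> real" where
  "numrad T = Sup (insert 0 {cmod (cinner (T x) x) | x. norm x = 1})"

end

theory Submission
  imports Defs
begin

lemma scaleC_zero_left [simp]: "scaleC 0 (x::'a::complex_inner) = 0"
proof -
  have "scaleC (0+0) x = scaleC 0 x + scaleC 0 x" by (rule scaleC_add_left)
  then show ?thesis by simp
qed

lemma scaleC_zero_right [simp]: "scaleC a (0::'a::complex_inner) = 0"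
proof -
  have "scaleC a (0+0) = scaleC a (0::'a) + scaleC a 0" by (rule scaleC_add_right)
  then show ?thesis by simp
qed

lemma scaleC_minus_right: "scaleC a (- x::'a::complex_inner) = - scaleC a x"
proof -
  have "scaleC a (x + - x) = scaleC a x + scaleC a (-x)" by (rule scaleC_add_right)
  then show ?thesis by (simp add: eq_neg_iff_add_eq_0 add.commute)
qed

lemma scaleC_diff_right: "scaleC a (x - y::'a::complex_inner) = scaleC a x - scaleC a y"
  by (metis diff_conv_add_uminus scaleC_add_right scaleC_minus_right)

lemma scaleC_minus_left: "scaleC (- a) (x::'a::complex_inner) = - scaleC a x"
proof -
  have "scaleC (a + - a) x = scaleC a x + scaleC (-a) x" by (rule scaleC_add_left)
  then show ?thesis by (simp add: eq_neg_iff_add_eq_0 add.commute)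
qed

lemma cinner_zero_left [simp]: "cinner 0 (y::'a::complex_inner) = 0"
proof -
  have "cinner (0+0) y = cinner 0 y + cinner 0 y" by (rule cinner_add_left)
  then show ?thesis by simp
qed

lemma cinner_minus_left: "cinner (- x) (y::'a::complex_inner) = - cinner x y"
proof -
  have "cinner (x + - x) y = cinner x y + cinner (-x) y" by (rule cinner_add_left)
  then show ?thesis by (simp add: eq_neg_iff_add_eq_0 add.commute)
qed

lemma cinner_diff_left: "cinner (x - z) (y::'a::complex_inner) = cinner x y - cinner z y"
  by (metis diff_conv_add_uminus cinner_add_left cinner_minus_left)

lemma cinner_add_right: "cinner x (y + z::'a::complex_inner) = cinner x y + cinner x z"
  by (metis cinner_commute cinner_add_left complex_cnj_add)

lemma cinner_diff_right: "cinner x (y - z::'a::complex_inner) = cinner x y - cinner x z"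
  by (metis cinner_commute cinner_diff_left complex_cnj_diff)

lemma cinner_zero_right [simp]: "cinner x (0::'a::complex_inner) = 0"
  by (metis cinner_commute cinner_zero_left complex_cnj_zero)

lemma cinner_scaleC_right: "cinner x (scaleC a y::'a::complex_inner) = cnj a * cinner x y"
  by (metis cinner_commute cinner_scaleC_left complex_cnj_mult complex_cnj_cnj)

lemma cinner_self: "cinner x (x::'a::complex_inner) = complex_of_real ((norm x)^2)"
proof -
  have "Im (cinner x x) = Im (cnj (cinner x x))" using cinner_commute[of x x] by simp
  then have im: "Im (cinner x x) = 0" by simp
  have "0 \<le> Re (cinner x x)" using norm_eq_sqrt_cinner[of x] norm_ge_zero[of x] by simp
  then have "(norm x)^2 = Re (cinner x x)" using norm_eq_sqrt_cinner[of x] by simp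
  then show ?thesis using im by (simp add: complex_eq_iff)
qed

lemma norm_sq_Re: "(norm (x::'a::complex_inner))^2 = Re (cinner x x)"
  by (simp add: cinner_self)

lemma norm_scaleC: "norm (scaleC a (x::'a::complex_inner)) = cmod a * norm x"
proof -
  have "cinner (scaleC a x) (scaleC a x) = a * cnj a * cinner x x"
    by (simp add: cinner_scaleC_left cinner_scaleC_right mult.assoc)
  then have "(norm (scaleC a x))^2 = Re (a * cnj a * cinner x x)"
    by (simp only: norm_sq_Re)
  also have "\<dots> = Re (complex_of_real ((cmod a)^2) * complex_of_real ((norm x)^2))"
    by (simp only: cinner_self complex_mult_cnj cmod_power2)
  also have "\<dots> = (cmod a * norm x)^2"
    by (simp only: Re_complex_of_real of_real_mult[symmetric] power_mult_distrib)
  finally show ?thesis by (simp add: power2_eq_iff_nonneg)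
qed

lemma norm_add_scaleC_sq:
  "(norm (x + scaleC s (y::'a::complex_inner)))^2 = (norm x)^2 + (cmod s)^2 * (norm y)^2 + 2 * Re (cnj s * cinner x y)"
proof -
  have "(norm (x + scaleC s y))^2 = Re (cinner x x + cnj s * cinner x y + s * cinner y x + s * cnj s * cinner y y)"
    by (simp add: norm_sq_Re cinner_add_left cinner_add_right cinner_scaleC_left cinner_scaleC_right algebra_simps)
  also have "s * cinner y x = cnj (cnj s * cinner x y)" by (metis cinner_commute complex_cnj_cnj complex_cnj_mult)
  finally show ?thesis
    by (simp add: cinner_self complex_mult_cnj cmod_power2 del: of_real_power)
qed

lemma norm_proj_sq:
  fixes x y :: "'a::complex_inner"
  assumes "y \<noteq> 0"
  shows "(norm (x + scaleC (- (cinner x y / complex_of_real ((norm y)^2))) y))^2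
         = (norm x)^2 - (cmod (cinner x y))^2 / (norm y)^2"
proof -
  define c where "c = cinner x y"
  define n where "n = norm y"
  have n: "n > 0" using assms by (simp add: n_def)
  have 1: "(cmod (- (c / complex_of_real (n^2))))^2 * n^2 = (cmod c)^2 / n^2"
  proof -
    have "cmod (- (c / complex_of_real (n^2))) = cmod c / n^2"
      by (simp add: norm_divide del: of_real_power)
    moreover have "(cmod c / n^2)^2 * n^2 = (cmod c)^2 / n^2" using n
      by (simp add: power_divide power2_eq_square)
    ultimately show ?thesis by simp
  qed
  have cc: "cnj c * c = complex_of_real ((cmod c)^2)"
    by (simp only: complex_norm_square mult.commute)
  have "cnj (- (c / complex_of_real (n^2))) * c = - (cnj c * c) / complex_of_real (n^2)"
    by (simp del: of_real_power)
  also have "\<dots> = - complex_of_real ((cmod c)^2 / n^2)"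
    unfolding cc by (simp only: of_real_divide minus_divide_left)
  finally have "cnj (- (c / complex_of_real (n^2))) * c = - complex_of_real ((cmod c)^2 / n^2)" .
  then have 2: "Re (cnj (- (c / complex_of_real (n^2))) * c) = - ((cmod c)^2 / n^2)"
    by (simp only: uminus_complex.sel Re_complex_of_real)
  show ?thesis
    unfolding norm_add_scaleC_sq c_def[symmetric] n_def[symmetric] using 1 2 by linarith
qed

lemma cauchy_schwarz: "cmod (cinner x y) \<le> norm x * norm (y::'a::complex_inner)"
proof (cases "y = 0")
  case True then show ?thesis by simp
next
  case False
  have "0 \<le> (norm (x + scaleC (- (cinner x y / complex_of_real ((norm y)^2))) y))^2"
    by (rule zero_le_power2)
  then have "0 \<le> (norm x)^2 - (cmod (cinner x y))^2 / (norm y)^2"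
    by (simp only: norm_proj_sq[OF False])
  then have "(cmod (cinner x y))^2 / (norm y)^2 \<le> (norm x)^2" by linarith
  then have "(cmod (cinner x y))^2 \<le> (norm x)^2 * (norm y)^2"
    using False by (simp add: pos_divide_le_eq)
  then have "(cmod (cinner x y))^2 \<le> (norm x * norm y)^2"
    by (simp only: power_mult_distrib)
  then show ?thesis by (rule power2_le_imp_le) simp
qed

lemma perp_of_min:
  fixes x y :: "'a::complex_inner"
  assumes "\<And>t. (norm x)^2 \<le> (norm (x + scaleC t y))^2"
  shows "cinner x y = 0"
proof (cases "y = 0")
  case True then show ?thesis by simp
next
  case False
  have "(norm x)^2 \<le> (norm x)^2 - (cmod (cinner x y))^2 / (norm y)^2"
    using assms norm_proj_sq[OF False, of x] by metis
  then have "(cmod (cinner x y))^2 / (norm y)^2 \<le> 0" by simp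
  then have "(cmod (cinner x y))^2 \<le> 0" using False
    by (simp add: divide_le_0_iff)
  then show ?thesis by simp
qed

lemma buzano:
  fixes u v e :: "'a::complex_inner"
  assumes "norm e = 1"
  shows "2 * cmod (cinner u e * cinner e v) \<le> norm u * norm v + cmod (cinner u v)"
proof -
  define w where "w = - u + scaleC (2 * cinner u e) e"
  have "(norm w)^2 = (norm u)^2 + (cmod (2 * cinner u e))^2 - 2 * Re (cnj (2 * cinner u e) * cinner u e)"
    unfolding w_def norm_add_scaleC_sq using assms by (simp add: cinner_minus_left)
  also have "\<dots> = (norm u)^2"
    by (simp add: norm_mult power_mult_distrib, subst cmod_power2, simp add: power2_eq_square)
  finally have nw: "norm w = norm u" by (simp add: power2_eq_iff_nonneg)
  have "cinner w v = 2 * (cinner u e * cinner e v) - cinner u v"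
    unfolding w_def by (simp add: cinner_add_left cinner_minus_left cinner_diff_left cinner_scaleC_left mult.assoc)
  then have "2 * (cinner u e * cinner e v) = cinner w v + cinner u v" by simp
  then have "2 * cmod (cinner u e * cinner e v) = cmod (cinner w v + cinner u v)"
    by (metis norm_mult norm_numeral)
  also have "\<dots> \<le> cmod (cinner w v) + cmod (cinner u v)" by (rule norm_triangle_ineq)
  also have "\<dots> \<le> norm u * norm v + cmod (cinner u v)"
    using cauchy_schwarz[of w v] nw by simp
  finally show ?thesis .
qed

lemma bl_of_clinear:
  assumes "bounded_clinear (T::'a::complex_inner \<Rightarrow> 'b::complex_inner)"
  shows "bounded_linear T"
proof -
  from assms obtain K where K: "\<And>x. norm (T x) \<le> norm x * K"
    and add: "\<And>x y. T (x + y) = T x + T y" and sc: "\<And>c x. T (scaleC c x) = scaleC c (T x)"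
    unfolding bounded_clinear_def by blast
  show ?thesis
    by (rule bounded_linear_intro[where K=K]) (auto simp: add sc scaleR_scaleC K)
qed

lemma bl_functional:
  fixes f :: "'a::complex_inner \<Rightarrow> complex"
  assumes add: "\<And>x y. f (x + y) = f x + f y" and sc: "\<And>c x. f (scaleC c x) = c * f x"
    and bd: "\<And>x. cmod (f x) \<le> norm x * K"
  shows "bounded_linear f"
  by (rule bounded_linear_intro[where K=K]) (auto simp: add sc scaleR_scaleC bd scaleR_conv_of_real)

lemma parallelogram:
  fixes a b :: "'a::complex_inner"
  shows "(norm (a - b))^2 + (norm (a + b))^2 = 2 * (norm a)^2 + 2 * (norm b)^2"
proof -
  have 1: "(norm (a + b))^2 = (norm a)^2 + (norm b)^2 + 2 * Re (cinner a b)"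
    using norm_add_scaleC_sq[of a 1 b] by (simp add: scaleC_one)
  have 2: "(norm (a - b))^2 = (norm a)^2 + (norm b)^2 - 2 * Re (cinner a b)"
    using norm_add_scaleC_sq[of a "-1" b] by (simp add: scaleC_minus_left scaleC_one)
  show ?thesis using 1 2 by simp
qed

lemma riesz:
  fixes f :: "'a::chilbert_space \<Rightarrow> complex"
  assumes add: "\<And>x y. f (x + y) = f x + f y" and sc: "\<And>c x. f (scaleC c x) = c * f x"
    and bd: "\<And>x. cmod (f x) \<le> norm x * K"
  shows "\<exists>z. \<forall>x. f x = cinner x z"
proof (cases "\<forall>x. f x = 0")
  case True then show ?thesis by (intro exI[of _ 0]) simp
next
  case False
  then obtain x0 where x0: "f x0 \<noteq> 0" by blast
  have lin: "bounded_linear f" using bl_functional[OF add sc bd] .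
  have f0: "f 0 = 0" using sc[of 0 0] by simp
  define C where "C = {x. f x = 1}"
  have x1: "f (scaleC (inverse (f x0)) x0) = 1" using x0 by (simp add: sc)
  define S where "S = (\<lambda>x. (norm x)^2) ` C"
  define d where "d = Inf S"
  have Sne: "S \<noteq> {}" using x1 unfolding S_def C_def by blast
  have bdd: "bdd_below S" unfolding S_def by (auto intro!: bdd_belowI[of _ 0])
  have dle: "d \<le> (norm x)^2" if "f x = 1" for x
    unfolding d_def using bdd that by (intro cInf_lower) (auto simp: S_def C_def)
  have "\<exists>x. f x = 1 \<and> (norm x)^2 < d + inverse (real (Suc n))" for n
  proof -
    have "Inf S < d + inverse (real (Suc n))" unfolding d_def by simp
    from cInf_lessD[OF Sne this] show ?thesis unfolding S_def C_def by blast
  qed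
  then have "\<forall>n. \<exists>x. f x = 1 \<and> (norm x)^2 < d + inverse (real (Suc n))" by blast
  from choice[OF this] have "\<exists>xs. \<forall>n. f (xs n) = 1 \<and> (norm (xs n))^2 < d + inverse (real (Suc n))" .
  then obtain xs where xs1: "\<And>n. f (xs n) = 1"
    and xs2: "\<And>n. (norm (xs n))^2 < d + inverse (real (Suc n))" by blast
  have par: "(norm (xs m - xs n))^2 \<le> 2 * inverse (real (Suc m)) + 2 * inverse (real (Suc n))" for m n
  proof -
    have "f (scaleC (1/2) (xs m + xs n)) = 1" by (simp add: sc add xs1)
    then have "d \<le> (norm (scaleC (1/2) (xs m + xs n)))^2" by (rule dle)
    then have "4 * d \<le> (norm (xs m + xs n))^2" by (simp add: norm_scaleC power_mult_distrib power_divide)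
    then show ?thesis using parallelogram[of "xs m" "xs n"] xs2[of m] xs2[of n] by linarith
  qed
  have "Cauchy xs"
  proof (rule metric_CauchyI)
    fix e :: real assume e: "e > 0"
    obtain M :: nat where M: "4 / e^2 < real M" using reals_Archimedean2 by blast
    have "\<forall>m\<ge>M. \<forall>n\<ge>M. dist (xs m) (xs n) < e"
    proof (intro allI impI)
      fix m n assume mn: "m \<ge> M" "n \<ge> M"
      have im: "inverse (real (Suc m)) \<le> inverse (real (Suc M))" using mn by (simp add: field_simps)
      have inn: "inverse (real (Suc n)) \<le> inverse (real (Suc M))" using mn by (simp add: field_simps)
      have "4 * inverse (real (Suc M)) < e^2"
      proof -
        have "4 < e^2 * real M" using M e by (simp add: field_simps)
        also have "\<dots> \<le> e^2 * real (Suc M)" using e by simp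
        finally show ?thesis using e by (simp add: field_simps)
      qed
      then have "(norm (xs m - xs n))^2 < e^2" using par[of m n] im inn by linarith
      then have "norm (xs m - xs n) < e" using e by (simp add: power_less_imp_less_base)
      then show "dist (xs m) (xs n) < e" by (simp add: dist_norm)
    qed
    then show "\<exists>M. \<forall>m\<ge>M. \<forall>n\<ge>M. dist (xs m) (xs n) < e" by blast
  qed
  then obtain w where w: "xs \<longlonglongrightarrow> w" using Cauchy_convergent_iff convergent_def by blast
  have "(\<lambda>n. f (xs n)) \<longlonglongrightarrow> f w" using bounded_linear.tendsto[OF lin w] .
  then have fw: "f w = 1" using xs1 by (simp add: LIMSEQ_const_iff)
  have "(\<lambda>n. (norm (xs n))^2) \<longlonglongrightarrow> (norm w)^2" by (intro tendsto_intros w)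
  moreover have "(\<lambda>n. d + inverse (real (Suc n))) \<longlonglongrightarrow> d + 0"
    by (intro tendsto_intros LIMSEQ_inverse_real_of_nat)
  ultimately have wd: "(norm w)^2 \<le> d"
    using xs2 by (intro LIMSEQ_le[of "\<lambda>n. (norm (xs n))^2" _ "\<lambda>n. d + inverse (real (Suc n))"]) (auto intro: less_imp_le)
  have wmin: "(norm w)^2 \<le> (norm x)^2" if "f x = 1" for x using dle[OF that] wd by linarith
  have wnz: "w \<noteq> 0" using fw f0 by auto
  have key: "f x = cinner x (scaleC (complex_of_real (1 / (norm w)^2)) w)" for x
  proof -
    define n where "n = x - scaleC (f x) w"
    have fn: "f n = 0" unfolding n_def using fw
      by (simp add: linear_diff[OF bounded_linear.linear[OF lin]] sc)
    have "cinner w n = 0"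
    proof (rule perp_of_min)
      fix t
      have "f (w + scaleC t n) = 1" by (simp add: add sc fn fw)
      then show "(norm w)^2 \<le> (norm (w + scaleC t n))^2" by (rule wmin)
    qed
    then have "cinner n w = 0" by (metis cinner_commute complex_cnj_zero)
    then have "cinner x w = f x * complex_of_real ((norm w)^2)"
      unfolding n_def by (simp add: cinner_diff_left cinner_scaleC_left cinner_self)
    then show ?thesis using wnz by (simp add: cinner_scaleC_right del: of_real_power)
  qed
  then show ?thesis by blast
qed


lemma adjoint_prop:
  assumes "bounded_clinear (T::'a::chilbert_space \<Rightarrow> 'a)"
  shows "cinner (T x) y = cinner x (cadjoint T y)"
proof -
  from assms obtain K where K: "\<And>x. norm (T x) \<le> norm x * K"
    and add: "\<And>x y. T (x + y) = T x + T y" and sc: "\<And>c x. T (scaleC c x) = scaleC c (T x)"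
    unfolding bounded_clinear_def by blast
  have "\<exists>z. \<forall>x. cinner (T x) y = cinner x z" for y
  proof (rule riesz[where K="K * norm y"])
    fix x
    show "cmod (cinner (T x) y) \<le> norm x * (K * norm y)"
    proof -
      have "cmod (cinner (T x) y) \<le> norm (T x) * norm y" by (rule cauchy_schwarz)
      also have "\<dots> \<le> norm x * K * norm y" by (rule mult_right_mono[OF K]) simp
      finally show ?thesis by (simp add: mult.assoc)
    qed
  qed (simp_all add: add sc cinner_add_left cinner_scaleC_left)
  then have "\<forall>y. \<exists>z. \<forall>x. cinner (T x) y = cinner x z" by blast
  from choice[OF this] have "\<exists>S. \<forall>y x. cinner (T x) y = cinner x (S y)" .
  then obtain S where S: "\<And>x y. cinner (T x) y = cinner x (S y)" by blast
  have "cadjoint T = S"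
    unfolding cadjoint_def
  proof (rule the_equality)
    show "\<forall>x y. cinner (T x) y = cinner x (S y)" using S by blast
  next
    fix S' assume S': "\<forall>x y. cinner (T x) y = cinner x (S' y)"
    show "S' = S"
    proof
      fix y
      define d where "d = S' y - S y"
      have "cinner d d = cinner d (S' y) - cinner d (S y)" unfolding d_def by (simp add: cinner_diff_right)
      also have "\<dots> = 0" using S'[rule_format, of d y] S[of d y] by simp
      finally have "(norm d)^2 = 0" using cinner_self[of d] by simp
      then show "S' y = S y" unfolding d_def by simp
    qed
  qed
  then show ?thesis using S by simp
qed

lemma adjoint_bound:
  assumes "bounded_clinear (T::'a::chilbert_space \<Rightarrow> 'a)"
  shows "norm (cadjoint T y) \<le> onorm T * norm y"
proof -
  define z where "z = cadjoint T y"
  have lin: "bounded_linear T" using bl_of_clinear[OF assms] .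
  have "(norm z)^2 = Re (cinner z z)" by (rule norm_sq_Re)
  also have "cinner z z = cinner (T z) y" unfolding z_def by (simp add: adjoint_prop[OF assms])
  also have "Re (cinner (T z) y) \<le> cmod (cinner (T z) y)" by (rule complex_Re_le_cmod)
  also have "\<dots> \<le> norm (T z) * norm y" by (rule cauchy_schwarz)
  also have "\<dots> \<le> onorm T * norm z * norm y" by (rule mult_right_mono[OF onorm[OF lin]]) simp
  finally have h: "norm z * norm z \<le> norm z * (onorm T * norm y)" by (simp add: power2_eq_square mult_ac)
  show ?thesis
  proof (cases "z = 0")
    case True then show ?thesis using onorm_pos_le[OF lin] by (simp add: z_def[symmetric])
  next
    case False
    then have "norm z > 0" by simp
    with h show ?thesis unfolding z_def[symmetric] by (simp add: mult_le_cancel_left)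
  qed
qed

lemma powr_midpoint:
  fixes a b p :: real
  assumes a: "0 \<le> a" and b: "0 \<le> b" and p: "p \<ge> 1"
  shows "((a + b) / 2) powr p \<le> 1/2 * a powr p + 1/2 * b powr p"
proof -
  have two: "2 \<le> (2::real) powr p"
  proof -
    have "(2::real) powr 1 \<le> 2 powr p" by (rule powr_mono) (use p in auto)
    then show ?thesis by simp
  qed
  have single: "(c / 2) powr p \<le> 1/2 * c powr p" if c: "0 \<le> c" for c :: real
  proof -
    have "(c / 2) powr p = c powr p / 2 powr p" using c by (simp add: powr_divide)
    also have "\<dots> \<le> c powr p / 2"
      using two by (intro divide_left_mono) auto
    finally show ?thesis by simp
  qed
  show ?thesis
  proof (cases "a = 0 \<or> b = 0")
    case True
    then show ?thesis
    proof
      assume "a = 0" then show ?thesis using single[OF b] p by simp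
    next
      assume "b = 0" then show ?thesis using single[OF a] p by simp
    qed
  next
    case False
    then have "a > 0" "b > 0" using a b by auto
    then have "((1 - 1/2) *\<^sub>R a + (1/2) *\<^sub>R b) powr p \<le> (1 - 1/2) * a powr p + (1/2) * b powr p"
      by (intro convex_onD[OF powr_convex[OF p]]) auto
    then show ?thesis by (simp add: field_simps)
  qed
qed

theorem mainTheorem5:
  fixes A B :: "'a::chilbert_space \<Rightarrow> 'a" and p :: real
  assumes "bounded_clinear A" and "bounded_clinear B" and "p \<ge> 1"
  shows "numrad (cadjoint A \<circ> B) powr p
           \<le> 1/2 * onorm A powr p * onorm B powr p + 1/2 * numrad (B \<circ> cadjoint A) powr p"
proof -
  define As where "As = cadjoint A"
  define Bs where "Bs = cadjoint B"
  have linA: "bounded_linear A" using bl_of_clinear[OF assms(1)] .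
  have linB: "bounded_linear B" using bl_of_clinear[OF assms(2)] .
  have hA: "\<And>x y. cinner (A x) y = cinner x (As y)" unfolding As_def by (rule adjoint_prop[OF assms(1)])
  have hB: "\<And>x y. cinner (B x) y = cinner x (Bs y)" unfolding Bs_def by (rule adjoint_prop[OF assms(2)])
  have nAs: "\<And>y. norm (As y) \<le> onorm A * norm y" unfolding As_def by (rule adjoint_bound[OF assms(1)])
  have nBs: "\<And>y. norm (Bs y) \<le> onorm B * norm y" unfolding Bs_def by (rule adjoint_bound[OF assms(2)])
  define nA where "nA = onorm A"
  define nB where "nB = onorm B"
  have nA0: "0 \<le> nA" unfolding nA_def by (rule onorm_pos_le[OF linA])
  have nB0: "0 \<le> nB" unfolding nB_def by (rule onorm_pos_le[OF linB])
  define SB where "SB = insert 0 {cmod (cinner ((B \<circ> As) y) y) | y. norm y = 1}"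
  have SBb: "s \<le> nB * nA" if "s \<in> SB" for s
  proof -
    { fix y :: 'a assume y: "norm y = 1"
      have "cmod (cinner (B (As y)) y) \<le> norm (B (As y)) * norm y" by (rule cauchy_schwarz)
      also have "\<dots> = norm (B (As y))" using y by simp
      also have "\<dots> \<le> nB * norm (As y)" unfolding nB_def by (rule onorm[OF linB])
      also have "\<dots> \<le> nB * nA" using nAs[of y] y nB0 unfolding nA_def by (simp add: mult_left_mono)
      finally have "cmod (cinner (B (As y)) y) \<le> nB * nA" . }
    then show ?thesis using that nA0 nB0 unfolding SB_def by auto
  qed
  have bddB: "bdd_above SB" using SBb by (intro bdd_aboveI) 
  define wB where "wB = numrad (B \<circ> As)"
  have wBdef: "wB = Sup SB" unfolding wB_def SB_def numrad_def by simp
  have wB0: "0 \<le> wB" unfolding wBdef by (rule cSup_upper[OF _ bddB]) (simp add: SB_def)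
  have wBy: "cmod (cinner (B (As y)) y) \<le> wB" if "norm y = 1" for y
    unfolding wBdef by (rule cSup_upper[OF _ bddB]) (use that in \<open>auto simp: SB_def\<close>)
  define M where "M = (nA * nB + wB) / 2"
  have M0: "0 \<le> M" unfolding M_def using nA0 nB0 wB0 by simp
  have point: "cmod (cinner (As (B x)) x) \<le> M" if x: "norm x = 1" for x
  proof -
    have e1: "cinner (As (B x)) x = cinner (B x) (A x)"
      by (metis cinner_commute hA)
    show ?thesis
    proof (cases "A x = 0")
      case True then show ?thesis using e1 M0 by simp
    next
      case False
      define r where "r = 1 / norm (A x)"
      have r0: "r > 0" using False by (simp add: r_def)
      define y where "y = scaleC (complex_of_real r) (A x)"
      have ny: "norm y = 1" unfolding y_def r_def using False by (simp add: norm_scaleC norm_divide)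
      have c1: "cinner (As y) x = complex_of_real (norm (A x))"
      proof -
        have "cinner (As y) x = cnj (cinner (A x) y)" by (metis cinner_commute hA)
        also have "cinner (A x) y = complex_of_real r * complex_of_real ((norm (A x))^2)"
          unfolding y_def by (simp add: cinner_scaleC_right cinner_self del: of_real_power)
        also have "\<dots> = complex_of_real (norm (A x))"
        proof -
          have "r * (norm (A x))^2 = norm (A x)" using False by (simp add: r_def power2_eq_square)
          then show ?thesis by (metis of_real_mult)
        qed
        finally show ?thesis by simp
      qed
      have c2: "cinner x (Bs y) = complex_of_real r * cinner (B x) (A x)"
        unfolding hB[symmetric] y_def by (simp add: cinner_scaleC_right)
      have prod: "cinner (As y) x * cinner x (Bs y) = cinner (B x) (A x)"
      proof -
        have "norm (A x) * r = 1" using False by (simp add: r_def)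
        then have rr: "complex_of_real (norm (A x)) * complex_of_real r = 1" by (metis of_real_1 of_real_mult)
        show ?thesis unfolding c1 c2 mult.assoc[symmetric] rr by simp
      qed
      have c3: "cinner (As y) (Bs y) = cinner (B (As y)) y" by (simp add: hB)
      have "2 * cmod (cinner (As y) x * cinner x (Bs y)) \<le> norm (As y) * norm (Bs y) + cmod (cinner (As y) (Bs y))"
        by (rule buzano[OF x])
      also have "\<dots> \<le> nA * nB + wB"
      proof (rule add_mono)
        show "norm (As y) * norm (Bs y) \<le> nA * nB"
          using nAs[of y] nBs[of y] ny unfolding nA_def nB_def
          by (intro mult_mono) (auto simp: onorm_pos_le[OF linB] onorm_pos_le[OF linA])
        show "cmod (cinner (As y) (Bs y)) \<le> wB" unfolding c3 by (rule wBy[OF ny])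
      qed
      finally show ?thesis unfolding M_def prod e1 by simp
    qed
  qed
  define SA where "SA = insert 0 {cmod (cinner ((As \<circ> B) x) x) | x. norm x = 1}"
  have SAb: "s \<le> M" if "s \<in> SA" for s using that point M0 unfolding SA_def by auto
  have bddA: "bdd_above SA" using SAb by (intro bdd_aboveI)
  define wA where "wA = numrad (As \<circ> B)"
  have wAdef: "wA = Sup SA" unfolding wA_def SA_def numrad_def by simp
  have wA0: "0 \<le> wA" unfolding wAdef by (rule cSup_upper[OF _ bddA]) (simp add: SA_def)
  have wAM: "wA \<le> M" unfolding wAdef by (rule cSup_least) (auto simp: SA_def M0 point)
  have "wA powr p \<le> M powr p" using wA0 wAM assms(3) by (intro powr_mono2) auto
  also have "\<dots> \<le> 1/2 * (nA * nB) powr p + 1/2 * wB powr p"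
    unfolding M_def using nA0 nB0 wB0 assms(3) by (intro powr_midpoint) auto
  also have "(nA * nB) powr p = nA powr p * nB powr p" using nA0 nB0 by (simp add: powr_mult)
  finally show ?thesis unfolding wA_def nA_def nB_def As_def wB_def by (simp add: mult.assoc)
qed

end
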